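(* Let $M$ be any matroid and let $N$ be a matroid whose simplification is the free matroid $U_{n,n}$. Then a tensor product of $M$ and $N$ exists and is unique.
   Context: Quasi product of matroids $M,N$: a matroid $P$ on $E(M)\times E(N)$ such that for every non-loop $e\in E(M)$, $x\mapsto(e,x)$ is an isomorphism $N\cong P|_{\{e\}\times E(N)}$; for every non-loop $f\in E(N)$, $x\mapsto(x,f)$ is an isomorphism $M\cong P|_{E(M)\times\{f\}}$; and the rows $\{e\}\times E(N)$ with $e$ a loop of $M$ and columns $E(M)\times\{f\}$ with $f$ a loop of $N$ have rank $0$. A tensor product is a quasi product of rank $\mathrm{rk}(M)\mathrm{rk}(N)$. $U_{n,n}$ is the free matroid of rank $n$ on $n$ elements. *)

theory Defs
  imports Main
begin

type_synonym 'a matroid = "'a set \<times> 'a set set"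

definition ground :: "'a matroid \<Rightarrow> 'a set" where
  "ground M = fst M"

definition indep :: "'a matroid \<Rightarrow> 'a set \<Rightarrow> bool" where
  "indep M I \<longleftrightarrow> I \<in> snd M"

definition matroid :: "'a matroid \<Rightarrow> bool" where
  "matroid M \<longleftrightarrow> finite (ground M)
     \<and> (\<forall>I. indep M I \<longrightarrow> I \<subseteq> ground M)
     \<and> indep M {}
     \<and> (\<forall>I J. indep M J \<and> I \<subseteq> J \<longrightarrow> indep M I)
     \<and> (\<forall>I J. indep M I \<and> indep M J \<and> card I < card J
           \<longrightarrow> (\<exists>x\<in>J - I. indep M (insert x I)))"

definition rank :: "'a matroid \<Rightarrow> 'a set \<Rightarrow> nat" where
  "rank M X = Max (card ` {I. indep M I \<and> I \<subseteq> X})"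

definition rk :: "'a matroid \<Rightarrow> nat" where
  "rk M = rank M (ground M)"

definition restrict :: "'a matroid \<Rightarrow> 'a set \<Rightarrow> 'a matroid" where
  "restrict M S = (S, {I. indep M I \<and> I \<subseteq> S})"

definition loop :: "'a matroid \<Rightarrow> 'a \<Rightarrow> bool" where
  "loop M e \<longleftrightarrow> e \<in> ground M \<and> \<not> indep M {e}"

definition matroid_iso :: "('a \<Rightarrow> 'b) \<Rightarrow> 'a matroid \<Rightarrow> 'b matroid \<Rightarrow> bool" where
  "matroid_iso f M N \<longleftrightarrow> bij_betw f (ground M) (ground N)
     \<and> (\<forall>I. I \<subseteq> ground M \<longrightarrow> (indep M I \<longleftrightarrow> indep N (f ` I)))"

definition free_matroid :: "nat \<Rightarrow> nat matroid" where
  "free_matroid n = ({0..<n}, Pow {0..<n})"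

definition parallel :: "'a matroid \<Rightarrow> 'a \<Rightarrow> 'a \<Rightarrow> bool" where
  "parallel M e f \<longleftrightarrow> e \<in> ground M \<and> f \<in> ground M \<and> \<not> loop M e \<and> \<not> loop M f
     \<and> (e = f \<or> \<not> indep M {e, f})"

definition is_simplification :: "'a matroid \<Rightarrow> 'a matroid \<Rightarrow> bool" where
  "is_simplification M S \<longleftrightarrow> (\<exists>T. T \<subseteq> ground M \<and> (\<forall>t\<in>T. \<not> loop M t)
     \<and> (\<forall>e\<in>ground M. \<not> loop M e \<longrightarrow> (\<exists>!t. t \<in> T \<and> parallel M e t))
     \<and> S = restrict M T)"

definition simplification_is_free :: "'a matroid \<Rightarrow> nat \<Rightarrow> bool" where
  "simplification_is_free M n \<longleftrightarrow>
     (\<exists>S f. is_simplification M S \<and> matroid_iso f S (free_matroid n))"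

definition quasi_product :: "'a matroid \<Rightarrow> 'b matroid \<Rightarrow> ('a \<times> 'b) matroid \<Rightarrow> bool" where
  "quasi_product M N P \<longleftrightarrow> matroid P \<and> ground P = ground M \<times> ground N
     \<and> (\<forall>e\<in>ground M. \<not> loop M e \<longrightarrow>
          matroid_iso (\<lambda>x. (e, x)) N (restrict P ({e} \<times> ground N)))
     \<and> (\<forall>f\<in>ground N. \<not> loop N f \<longrightarrow>
          matroid_iso (\<lambda>x. (x, f)) M (restrict P (ground M \<times> {f})))
     \<and> (\<forall>e\<in>ground M. loop M e \<longrightarrow> rank P ({e} \<times> ground N) = 0)
     \<and> (\<forall>f\<in>ground N. loop N f \<longrightarrow> rank P (ground M \<times> {f}) = 0)"

definition tensor_product :: "'a matroid \<Rightarrow> 'b matroid \<Rightarrow> ('a \<times> 'b) matroid \<Rightarrow> bool" where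
  "tensor_product M N P \<longleftrightarrow> quasi_product M N P \<and> rk P = rk M * rk N"

end

theory Submission
  imports Defs
begin

context
  fixes M :: "'a matroid"
  assumes mM: "matroid M"
begin

lemma m_fin: "finite (ground M)"
  using mM unfolding matroid_def by blast

lemma m_sub: "indep M I \<Longrightarrow> I \<subseteq> ground M"
  using mM unfolding matroid_def by blast

lemma m_empty: "indep M {}"
  using mM unfolding matroid_def by blast

lemma m_mono: "indep M J \<Longrightarrow> I \<subseteq> J \<Longrightarrow> indep M I"
  using mM unfolding matroid_def by blast

lemma m_aug: "indep M I \<Longrightarrow> indep M J \<Longrightarrow> card I < card J \<Longrightarrow> \<exists>x\<in>J - I. indep M (insert x I)"
  using mM unfolding matroid_def by blast

lemma m_finI: "indep M I \<Longrightarrow> finite I"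
  using m_sub m_fin finite_subset by blast

lemma m_extend:
  assumes "indep M A" "indep M X" "card A \<le> card X"
  shows "\<exists>B. A \<subseteq> B \<and> B \<subseteq> A \<union> X \<and> indep M B \<and> card B = card X"
  using assms
proof (induction "card X - card A" arbitrary: A)
  case 0
  then show ?case by auto
next
  case (Suc d)
  then have "card A < card X" by linarith
  with Suc.prems obtain x where x: "x \<in> X - A" "indep M (insert x A)"
    using m_aug by blast
  have fA: "finite A" using Suc.prems m_finI by blast
  have c: "card (insert x A) = Suc (card A)" using x fA by simp
  have "d = card X - card (insert x A)" using Suc.hyps c by simp
  moreover have "card (insert x A) \<le> card X" using c \<open>card A < card X\<close> by simp
  ultimately obtain B where "insert x A \<subseteq> B" "B \<subseteq> insert x A \<union> X" "indep M B" "card B = card X"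
    using Suc.hyps(1) x Suc.prems by blast
  then show ?case using x by blast
qed

lemma m_span_card:
  assumes "indep M B" "indep M Q" "\<forall>q\<in>Q. q \<in> B \<or> \<not> indep M (insert q B)"
  shows "card Q \<le> card B"
proof (rule ccontr)
  assume "\<not> card Q \<le> card B"
  then have "card B < card Q" by simp
  then obtain x where "x \<in> Q - B" "indep M (insert x B)" using m_aug assms by blast
  then show False using assms(3) by blast
qed

definition spans :: "'a set \<Rightarrow> 'a \<Rightarrow> bool" where
  "spans B y \<longleftrightarrow> y \<in> B \<or> \<not> indep M (insert y B)"

lemma m_span_trans:
  assumes B: "indep M B" and S: "indep M S" and SB: "\<forall>s\<in>S. spans B s" and y: "spans S y"
  shows "spans B y"
proof (rule ccontr)
  assume ny: "\<not> spans B y"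
  then have yB: "y \<notin> B" "indep M (insert y B)" unfolding spans_def by auto
  have yS: "y \<notin> S" using ny SB by blast
  then have yS2: "\<not> indep M (insert y S)" using y unfolding spans_def by blast
  have cSB: "card S \<le> card B" using m_span_card[OF B S] SB unfolding spans_def by blast
  have fB: "finite B" using B m_finI by blast
  have cyB: "card (insert y B) = Suc (card B)" using yB fB by simp
  obtain D where D: "S \<subseteq> D" "D \<subseteq> S \<union> insert y B" "indep M D" "card D = card (insert y B)"
    using m_extend[OF S yB(2)] cSB cyB by auto
  show False
  proof (cases "y \<in> D")
    case True
    then have "insert y S \<subseteq> D" using D by blast
    then show False using m_mono D yS2 by blast
  next
    case False
    then have "\<forall>q\<in>D. q \<in> B \<or> \<not> indep M (insert q B)"
      using D SB unfolding spans_def by blast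
    then have "card D \<le> card B" using m_span_card[OF B D(3)] by blast
    then show False using D cyB by simp
  qed
qed

lemma m_ps:
  assumes A: "indep M A" and a: "a \<in> A" and b: "b \<notin> A" and ib: "indep M {b}"
    and nab: "\<not> indep M {a, b}"
  shows "indep M (insert b (A - {a}))"
proof -
  have fA: "finite A" using A m_finI by blast
  have cA: "card A > 0" using a fA card_gt_0_iff by blast
  then have c1: "card {b} \<le> card A" by simp
  obtain B where B: "{b} \<subseteq> B" "B \<subseteq> {b} \<union> A" "indep M B" "card B = card A"
    using m_extend[OF ib A c1] by blast
  have "a \<notin> B"
  proof
    assume "a \<in> B"
    then have "{a, b} \<subseteq> B" using B by blast
    then show False using m_mono B nab by blast
  qed
  then have sub: "B \<subseteq> insert b (A - {a})" using B by blast
  have "card (insert b (A - {a})) = Suc (card (A - {a}))" using fA b by simp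
  also have "card (A - {a}) = card A - 1" using a fA by (simp add: card_Diff_singleton)
  finally have "card (insert b (A - {a})) = card A" using cA by simp
  then have "B = insert b (A - {a})"
    using card_subset_eq[OF _ sub] fA B by simp
  then show ?thesis using B by simp
qed

lemma m_subst:
  assumes "indep M A" "inj_on h A"
    "\<forall>p\<in>A. h p = p \<or> (h p \<notin> A \<and> indep M {h p} \<and> \<not> indep M {p, h p})"
  shows "indep M (h ` A)"
  using assms
proof (induction "card {p\<in>A. h p \<noteq> p}" arbitrary: A h)
  case 0
  have fA: "finite A" using "0.prems" m_finI by blast
  then have "{p\<in>A. h p \<noteq> p} = {}" using "0.hyps" by simp
  then have "h ` A = A" by force
  then show ?case using "0.prems" by simp
next
  case (Suc k)
  have fA: "finite A" using Suc.prems m_finI by blast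
  have "{p\<in>A. h p \<noteq> p} \<noteq> {}"
  proof
    assume "{p\<in>A. h p \<noteq> p} = {}"
    then show False using Suc.hyps(2) by (metis card.empty nat.distinct(1))
  qed
  then obtain p where p: "p \<in> A" "h p \<noteq> p" by blast
  then have hp: "h p \<notin> A" "indep M {h p}" "\<not> indep M {p, h p}" using Suc.prems(3) by auto
  define A' where "A' = insert (h p) (A - {p})"
  define h' where "h' = h(h p := h p)"
  have iA': "indep M A'" unfolding A'_def using m_ps[OF Suc.prems(1) p(1) hp(1) hp(2) hp(3)] .
  have eq: "\<And>q. q \<in> A - {p} \<Longrightarrow> h' q = h q" unfolding h'_def using hp(1) by auto
  have inj': "inj_on h' A'"
  proof (rule inj_onI)
    fix x y assume xy: "x \<in> A'" "y \<in> A'" "h' x = h' y"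
    have hx: "h' (h p) = h p" unfolding h'_def by simp
    show "x = y"
    proof (cases "x = h p")
      case True
      show ?thesis
      proof (rule ccontr)
        assume "x \<noteq> y"
        then have "y \<in> A - {p}" using xy True A'_def by auto
        then have "h y = h p" using eq[OF \<open>y \<in> A - {p}\<close>] xy(3) True hx by simp
        then show False using inj_onD[OF Suc.prems(2)] \<open>y \<in> A - {p}\<close> p(1) by blast
      qed
    next
      case False
      then have x1: "x \<in> A - {p}" using xy A'_def by auto
      show ?thesis
      proof (cases "y = h p")
        case True
        then have "h x = h p" using eq[OF x1] xy(3) True hx by simp
        then show ?thesis using inj_onD[OF Suc.prems(2)] x1 p(1) by blast
      next
        case False
        then have y1: "y \<in> A - {p}" using xy A'_def by auto
        then have "h x = h y" using eq[OF x1] eq[OF y1] xy(3) by simp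
        then show ?thesis using inj_onD[OF Suc.prems(2)] x1 y1 by blast
      qed
    qed
  qed
  have cond': "\<forall>q\<in>A'. h' q = q \<or> (h' q \<notin> A' \<and> indep M {h' q} \<and> \<not> indep M {q, h' q})"
  proof
    fix q assume q: "q \<in> A'"
    show "h' q = q \<or> (h' q \<notin> A' \<and> indep M {h' q} \<and> \<not> indep M {q, h' q})"
    proof (cases "q = h p")
      case True then show ?thesis unfolding h'_def by simp
    next
      case False
      then have q1: "q \<in> A - {p}" using q A'_def by auto
      then have "h q \<noteq> h p" using inj_onD[OF Suc.prems(2)] p(1) by blast
      then show ?thesis using Suc.prems(3) q1 eq[OF q1] A'_def by auto
    qed
  qed
  have setq: "{q\<in>A'. h' q \<noteq> q} = {q\<in>A. h q \<noteq> q} - {p}"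
    unfolding A'_def using eq hp(1) by (auto simp: h'_def)
  have "k = card {q\<in>A'. h' q \<noteq> q}"
    using setq Suc.hyps(2) p fA by simp
  then have "indep M (h' ` A')" using Suc.hyps(1) iA' inj' cond' by blast
  moreover have "h' ` A' = h ` A"
  proof -
    have "h' ` A' = insert (h' (h p)) (h' ` (A - {p}))" unfolding A'_def by simp
    moreover have "h' (h p) = h p" by (simp add: h'_def)
    ultimately have "h' ` A' = insert (h p) (h' ` (A - {p}))" by simp
    moreover
    have "h' ` (A - {p}) = h ` (A - {p})" using eq by (auto intro: image_cong)
    ultimately show ?thesis using p(1) by blast
  qed
  ultimately show ?case by simp
qed

lemma m_unsubst:
  assumes "indep M (h ` J)" "inj_on h J"
    "\<forall>y\<in>J. h y = y \<or> (y \<notin> h ` J \<and> indep M {y} \<and> \<not> indep M {h y, y})"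
  shows "indep M J"
proof -
  let ?g = "inv_into J h"
  have "indep M (?g ` (h ` J))"
  proof (rule m_subst[OF assms(1)])
    show "inj_on ?g (h ` J)" by (rule inj_on_inv_into) simp
    show "\<forall>p\<in>h ` J. ?g p = p \<or> (?g p \<notin> h ` J \<and> indep M {?g p} \<and> \<not> indep M {p, ?g p})"
    proof
      fix p assume "p \<in> h ` J"
      then obtain y where y: "y \<in> J" "p = h y" by blast
      have "?g p = y" using y assms(2) by (simp add: inv_into_f_f)
      then show "?g p = p \<or> (?g p \<notin> h ` J \<and> indep M {?g p} \<and> \<not> indep M {p, ?g p})"
        using assms(3) y by auto
    qed
  qed
  moreover have "?g ` (h ` J) = J" using assms(2) by (simp add: inv_into_image_cancel)
  ultimately show ?thesis by simp
qed

lemma rank_ge: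
  assumes "X \<subseteq> ground M" "indep M I" "I \<subseteq> X"
  shows "card I \<le> rank M X"
proof -
  have "finite X" using assms m_fin finite_subset by blast
  then have "finite {I. indep M I \<and> I \<subseteq> X}" by (rule finite_subset[rotated, OF finite_Pow_iff[THEN iffD2]]) auto
  then show ?thesis unfolding rank_def using assms by (intro Max_ge) auto
qed

lemma rank_ex:
  assumes "X \<subseteq> ground M"
  shows "\<exists>I. indep M I \<and> I \<subseteq> X \<and> card I = rank M X"
proof -
  have "finite X" using assms m_fin finite_subset by blast
  then have "finite {I. indep M I \<and> I \<subseteq> X}" by (rule finite_subset[rotated, OF finite_Pow_iff[THEN iffD2]]) auto
  moreover have "{I. indep M I \<and> I \<subseteq> X} \<noteq> {}" using m_empty by blast
  ultimately have "rank M X \<in> card ` {I. indep M I \<and> I \<subseteq> X}" unfolding rank_def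
    by (intro Max_in) auto
  then show ?thesis by auto
qed

lemma rank_eqI:
  assumes "X \<subseteq> ground M" "indep M I" "I \<subseteq> X" "card I = k"
    "\<And>J. indep M J \<Longrightarrow> J \<subseteq> X \<Longrightarrow> card J \<le> k"
  shows "rank M X = k"
  using rank_ge[OF assms(1-3)] rank_ex[OF assms(1)] assms by force

lemma rank_zero:
  assumes "X \<subseteq> ground M" "\<And>I. indep M I \<Longrightarrow> I \<subseteq> X \<Longrightarrow> I = {}"
  shows "rank M X = 0"
  using rank_eqI[OF assms(1) m_empty] assms(2) by fastforce

lemma indep_le_rk: "indep M I \<Longrightarrow> card I \<le> rk M"
  unfolding rk_def using rank_ge m_sub by blast

lemma nonloop_indep: "x \<in> ground M \<Longrightarrow> \<not> loop M x \<Longrightarrow> indep M {x}"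
  unfolding loop_def by blast

lemma indep_nonloop: "indep M I \<Longrightarrow> x \<in> I \<Longrightarrow> \<not> loop M x"
  unfolding loop_def using m_mono by blast

lemma par_pair:
  assumes "parallel M y t" "parallel M y' t" "y \<noteq> y'"
  shows "\<not> indep M {y, y'}"
proof
  assume i: "indep M {y, y'}"
  have it: "indep M {t}" using assms(1) unfolding parallel_def loop_def by blast
  have "card {t} < card {y, y'}" using assms(3) by simp
  then obtain x where x: "x \<in> {y, y'} - {t}" "indep M (insert x {t})" using m_aug[OF it i] by blast
  show False
  proof (cases "x = y")
    case True
    then show False using x assms(1) unfolding parallel_def by (auto simp: insert_commute)
  next
    case False
    then have "x = y'" using x by blast
    then show False using x assms(2) unfolding parallel_def by (auto simp: insert_commute)
  qed
qed

end



lemma restrict_indep: "indep (restrict M S) I \<longleftrightarrow> indep M I \<and> I \<subseteq> S"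
  unfolding restrict_def indep_def by simp

lemma restrict_ground: "ground (restrict M S) = S"
  unfolding restrict_def ground_def by simp

lemma par_sym: "parallel N a b \<Longrightarrow> parallel N b a"
  unfolding parallel_def by (auto simp: insert_commute)

lemma par_refl: "y \<in> ground N \<Longrightarrow> \<not> loop N y \<Longrightarrow> parallel N y y"
  unfolding parallel_def by simp

lemma par_neq: "parallel N y t \<Longrightarrow> y \<noteq> t \<Longrightarrow> \<not> indep N {y, t}"
  unfolding parallel_def by simp

lemma par_gr: "parallel N y t \<Longrightarrow> y \<in> ground N \<and> \<not> loop N y \<and> t \<in> ground N \<and> \<not> loop N t"
  unfolding parallel_def by simp

locale tsetup =
  fixes M :: "'a matroid" and N :: "'b matroid" and T :: "'b set"
  assumes mM: "matroid M" and mN: "matroid N" and TN: "T \<subseteq> ground N"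
    and Tnl: "\<And>t. t \<in> T \<Longrightarrow> \<not> loop N t"
    and Tuniq: "\<And>e. e \<in> ground N \<Longrightarrow> \<not> loop N e \<Longrightarrow> \<exists>!t. t \<in> T \<and> parallel N e t"
    and Tind: "\<And>I. I \<subseteq> T \<Longrightarrow> indep N I"
begin

definition cls :: "'b \<Rightarrow> 'b" where
  "cls y = (THE t. t \<in> T \<and> parallel N y t)"

lemma cls: "y \<in> ground N \<Longrightarrow> \<not> loop N y \<Longrightarrow> cls y \<in> T \<and> parallel N y (cls y)"
  unfolding cls_def by (rule theI'[OF Tuniq])

lemma cls_eq: "t \<in> T \<Longrightarrow> parallel N y t \<Longrightarrow> cls y = t"
proof -
  assume t: "t \<in> T" and p: "parallel N y t"
  have y: "y \<in> ground N" "\<not> loop N y" using par_gr[OF p] by auto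
  show "cls y = t" unfolding cls_def
    by (rule the1_equality[OF Tuniq[OF y]]) (rule conjI[OF t p])
qed

lemma T_self: "t \<in> T \<Longrightarrow> cls t = t"
proof -
  assume t: "t \<in> T"
  have "t \<in> ground N" using t TN by (rule subsetD[rotated])
  then have "parallel N t t" by (rule par_refl[OF _ Tnl[OF t]])
  then show ?thesis by (rule cls_eq[OF t])
qed

lemma T_par: "t \<in> T \<Longrightarrow> t' \<in> T \<Longrightarrow> parallel N t' t \<Longrightarrow> t' = t"
  using cls_eq[of t t'] T_self[of t'] by simp

lemma finT: "finite T"
  using TN m_fin[OF mN] finite_subset by blast

lemma T_indep: "indep N T"
  by (rule Tind) simp

lemma rkN_bound: "indep N J \<Longrightarrow> card J \<le> card T"
proof -
  assume J: "indep N J"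
  have "\<forall>q\<in>J. q \<in> T \<or> \<not> indep N (insert q T)"
  proof
    fix q assume q: "q \<in> J"
    have q1: "q \<in> ground N" using q m_sub[OF mN J] by (rule subsetD[rotated])
    have q2: "\<not> loop N q" by (rule indep_nonloop[OF mN J q])
    have c: "cls q \<in> T" "parallel N q (cls q)" using cls[OF q1 q2] by auto
    show "q \<in> T \<or> \<not> indep N (insert q T)"
    proof (cases "q = cls q")
      case True then show ?thesis using c by simp
    next
      case False
      have n: "\<not> indep N {q, cls q}" by (rule par_neq[OF c(2) False])
      have s: "{q, cls q} \<subseteq> insert q T" using c by simp
      have "\<not> indep N (insert q T)"
      proof
        assume "indep N (insert q T)"
        then have "indep N {q, cls q}" by (rule m_mono[OF mN _ s])
        then show False using n by simp
      qed
      then show ?thesis by simp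
    qed
  qed
  then show "card J \<le> card T" by (rule m_span_card[OF mN T_indep J])
qed

lemma rkN: "rk N = card T"
  unfolding rk_def by (rule rank_eqI[of N "ground N" T "card T"]) (use mN TN T_indep rkN_bound in auto)

definition cl :: "('a \<times> 'b) set \<Rightarrow> 'b \<Rightarrow> ('a \<times> 'b) set" where
  "cl I t = {p\<in>I. parallel N (snd p) t}"

definition good :: "('a \<times> 'b) set \<Rightarrow> bool" where
  "good I \<longleftrightarrow> I \<subseteq> ground M \<times> ground N \<and> (\<forall>p\<in>I. \<not> loop M (fst p) \<and> \<not> loop N (snd p))
     \<and> (\<forall>t\<in>T. inj_on fst (cl I t) \<and> indep M (fst ` cl I t))"

lemma card_decomp:
  assumes "finite I" "\<forall>p\<in>I. snd p \<in> ground N \<and> \<not> loop N (snd p)"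
  shows "card I = (\<Sum>t\<in>T. card (cl I t))"
proof -
  have "I = (\<Union>t\<in>T. cl I t)"
  proof
    show "I \<subseteq> (\<Union>t\<in>T. cl I t)"
    proof
      fix p assume p: "p \<in> I"
      then have "cls (snd p) \<in> T" "parallel N (snd p) (cls (snd p))" using assms(2) cls by auto
      then show "p \<in> (\<Union>t\<in>T. cl I t)" unfolding cl_def using p by blast
    qed
    show "(\<Union>t\<in>T. cl I t) \<subseteq> I" unfolding cl_def by blast
  qed
  moreover have "card (\<Union>t\<in>T. cl I t) = (\<Sum>t\<in>T. card (cl I t))"
  proof (rule card_UN_disjoint[OF finT])
    show "\<forall>i\<in>T. finite (cl I i)" unfolding cl_def using assms(1) by auto
    show "\<forall>i\<in>T. \<forall>j\<in>T. i \<noteq> j \<longrightarrow> cl I i \<inter> cl I j = {}"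
      unfolding cl_def using cls_eq by blast
  qed
  ultimately show ?thesis by simp
qed

lemma good_mono: "good I \<Longrightarrow> J \<subseteq> I \<Longrightarrow> good J"
proof -
  assume g: "good I" and J: "J \<subseteq> I"
  have clsub: "\<And>t. cl J t \<subseteq> cl I t" unfolding cl_def using J by auto
  have a: "J \<subseteq> ground M \<times> ground N" using g J unfolding good_def by auto
  have b: "\<forall>p\<in>J. \<not> loop M (fst p) \<and> \<not> loop N (snd p)" using g J unfolding good_def by auto
  have c: "\<forall>t\<in>T. inj_on fst (cl J t) \<and> indep M (fst ` cl J t)"
  proof
    fix t assume t: "t \<in> T"
    have i1: "inj_on fst (cl I t)" and i2: "indep M (fst ` cl I t)" using g t unfolding good_def by auto
    have "inj_on fst (cl J t)" by (rule inj_on_subset[OF i1 clsub])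
    moreover have "indep M (fst ` cl J t)" by (rule m_mono[OF mM i2 image_mono[OF clsub]])
    ultimately show "inj_on fst (cl J t) \<and> indep M (fst ` cl J t)" by simp
  qed
  show "good J" unfolding good_def using a b c by simp
qed

lemma good_fin: "good I \<Longrightarrow> finite I"
proof -
  assume "good I"
  then have "I \<subseteq> ground M \<times> ground N" unfolding good_def by simp
  moreover have "finite (ground M \<times> ground N)" using m_fin[OF mM] m_fin[OF mN] by simp
  ultimately show ?thesis by (rule finite_subset)
qed

lemma good_cl_card: "good I \<Longrightarrow> t \<in> T \<Longrightarrow> card (cl I t) \<le> rk M"
proof -
  assume g: "good I" and t: "t \<in> T"
  have i1: "inj_on fst (cl I t)" and i2: "indep M (fst ` cl I t)" using g t unfolding good_def by auto
  have "card (cl I t) = card (fst ` cl I t)" using card_image[OF i1] by simp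
  also have "\<dots> \<le> rk M" by (rule indep_le_rk[OF mM i2])
  finally show ?thesis .
qed

lemma good_card: "good I \<Longrightarrow> card I \<le> card T * rk M"
proof -
  assume g: "good I"
  have "\<forall>p\<in>I. snd p \<in> ground N \<and> \<not> loop N (snd p)" using g unfolding good_def by auto
  then have "card I = (\<Sum>t\<in>T. card (cl I t))" by (rule card_decomp[OF good_fin[OF g]])
  also have "\<dots> \<le> card T * rk M"
    using sum_bounded_above[of T "\<lambda>t. card (cl I t)" "rk M"] good_cl_card[OF g] by simp
  finally show ?thesis .
qed

end



context tsetup
begin

definition P0 :: "('a \<times> 'b) matroid" where
  "P0 = (ground M \<times> ground N, {I. good I})"

lemma P0_ground: "ground P0 = ground M \<times> ground N"
  unfolding P0_def ground_def by simp

lemma P0_indep: "indep P0 I \<longleftrightarrow> good I"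
  unfolding P0_def indep_def by simp

lemma good_empty: "good {}"
  unfolding good_def cl_def using m_empty[OF mM] by simp

lemma cl_insert: "cl (insert p I) t = (if parallel N (snd p) t then insert p (cl I t) else cl I t)"
  unfolding cl_def by auto

lemma good_aug:
  assumes gI: "good I" and gJ: "good J" and c: "card I < card J"
  shows "\<exists>x\<in>J - I. good (insert x I)"
proof -
  have sI: "\<forall>p\<in>I. snd p \<in> ground N \<and> \<not> loop N (snd p)" using gI unfolding good_def by auto
  have sJ: "\<forall>p\<in>J. snd p \<in> ground N \<and> \<not> loop N (snd p)" using gJ unfolding good_def by auto
  have cI: "card I = (\<Sum>t\<in>T. card (cl I t))" by (rule card_decomp[OF good_fin[OF gI] sI])
  have cJ: "card J = (\<Sum>t\<in>T. card (cl J t))" by (rule card_decomp[OF good_fin[OF gJ] sJ])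
  obtain t where t: "t \<in> T" "card (cl I t) < card (cl J t)"
  proof (rule ccontr)
    assume "\<not> thesis"
    then have "\<forall>t\<in>T. card (cl J t) \<le> card (cl I t)" using that by (meson not_less)
    then have "(\<Sum>t\<in>T. card (cl J t)) \<le> (\<Sum>t\<in>T. card (cl I t))" using sum_mono[of T "\<lambda>t. card (cl J t)" "\<lambda>t. card (cl I t)"] by blast
    then show False using c cI cJ by simp
  qed
  have iI: "inj_on fst (cl I t)" and dI: "indep M (fst ` cl I t)" using gI t(1) unfolding good_def by auto
  have iJ: "inj_on fst (cl J t)" and dJ: "indep M (fst ` cl J t)" using gJ t(1) unfolding good_def by auto
  have "card (fst ` cl I t) < card (fst ` cl J t)"
    using t(2) card_image[OF iI] card_image[OF iJ] by simp
  then obtain x where x: "x \<in> fst ` cl J t - fst ` cl I t" "indep M (insert x (fst ` cl I t))"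
    using m_aug[OF mM dI dJ] by blast
  then obtain p where p: "p \<in> cl J t" "fst p = x" by blast
  have pJ: "p \<in> J" and pt: "parallel N (snd p) t" using p(1) unfolding cl_def by auto
  have pI: "p \<notin> I"
  proof
    assume "p \<in> I"
    then have "p \<in> cl I t" using pt unfolding cl_def by simp
    then have "x \<in> fst ` cl I t" using p(2) by (metis image_eqI)
    then show False using x(1) by simp
  qed
  have g1: "insert p I \<subseteq> ground M \<times> ground N" using gI gJ pJ unfolding good_def by auto
  have g2: "\<forall>q\<in>insert p I. \<not> loop M (fst q) \<and> \<not> loop N (snd q)"
    using gI gJ pJ unfolding good_def by auto
  have g3: "\<forall>t'\<in>T. inj_on fst (cl (insert p I) t') \<and> indep M (fst ` cl (insert p I) t')"
  proof
    fix t' assume t': "t' \<in> T"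
    show "inj_on fst (cl (insert p I) t') \<and> indep M (fst ` cl (insert p I) t')"
    proof (cases "t' = t")
      case True
      have e: "cl (insert p I) t' = insert p (cl I t)" using True pt cl_insert by simp
      have "inj_on fst (insert p (cl I t))"
        using iI x p(2) by (simp add: inj_on_insert) blast
      moreover have "fst ` insert p (cl I t) = insert x (fst ` cl I t)" using p(2) by simp
      ultimately show ?thesis using e x(2) by simp
    next
      case False
      have "\<not> parallel N (snd p) t'"
      proof
        assume "parallel N (snd p) t'"
        then have "cls (snd p) = t'" by (rule cls_eq[OF t'])
        moreover have "cls (snd p) = t" by (rule cls_eq[OF t(1) pt])
        ultimately show False using False by simp
      qed
      then have e: "cl (insert p I) t' = cl I t'" using cl_insert by simp
      show ?thesis using e gI t' unfolding good_def by simp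
    qed
  qed
  have "good (insert p I)" unfolding good_def using g1 g2 g3 by simp
  then show ?thesis using pJ pI by blast
qed

lemma P0_matroid: "matroid P0"
  unfolding matroid_def P0_indep P0_ground
proof (intro conjI allI impI)
  show "finite (ground M \<times> ground N)" using m_fin[OF mM] m_fin[OF mN] by simp
  show "good {}" by (rule good_empty)
next
  fix I assume "good I" then show "I \<subseteq> ground M \<times> ground N" unfolding good_def by simp
next
  fix I J assume "good J \<and> I \<subseteq> J" then show "good I" using good_mono by blast
next
  fix I J assume "good I \<and> good J \<and> card I < card J"
  then show "\<exists>x\<in>J - I. good (insert x I)" using good_aug by blast
qed

lemma row0:
  assumes e: "e \<in> ground M" "\<not> loop M e" and J: "J \<subseteq> ground N"
  shows "indep N J \<longleftrightarrow> good ((\<lambda>x. (e, x)) ` J)"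
proof
  assume iJ: "indep N J"
  have g1: "(\<lambda>x. (e, x)) ` J \<subseteq> ground M \<times> ground N" using e J by auto
  have g2: "\<forall>q\<in>(\<lambda>x. (e, x)) ` J. \<not> loop M (fst q) \<and> \<not> loop N (snd q)"
  proof
    fix q assume "q \<in> (\<lambda>x. (e, x)) ` J"
    then obtain y where y: "y \<in> J" "q = (e, y)" by blast
    have "\<not> loop N y" by (rule indep_nonloop[OF mN iJ y(1)])
    then show "\<not> loop M (fst q) \<and> \<not> loop N (snd q)" using y e by simp
  qed
  have g3: "\<forall>t\<in>T. inj_on fst (cl ((\<lambda>x. (e, x)) ` J) t) \<and> indep M (fst ` cl ((\<lambda>x. (e, x)) ` J) t)"
  proof
    fix t assume t: "t \<in> T"
    have "inj_on fst (cl ((\<lambda>x. (e, x)) ` J) t)"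
    proof (rule inj_onI)
      fix p q assume p: "p \<in> cl ((\<lambda>x. (e, x)) ` J) t" and q: "q \<in> cl ((\<lambda>x. (e, x)) ` J) t"
        and f: "fst p = fst q"
      obtain y where y: "y \<in> J" "p = (e, y)" "parallel N y t" using p unfolding cl_def by auto
      obtain y' where y': "y' \<in> J" "q = (e, y')" "parallel N y' t" using q unfolding cl_def by auto
      show "p = q"
      proof (rule ccontr)
        assume "p \<noteq> q"
        then have ne: "y \<noteq> y'" using y y' by simp
        have "\<not> indep N {y, y'}" by (rule par_pair[OF mN y(3) y'(3) ne])
        moreover have "indep N {y, y'}" by (rule m_mono[OF mN iJ]) (use y y' in simp)
        ultimately show False by simp
      qed
    qed
    moreover have "indep M (fst ` cl ((\<lambda>x. (e, x)) ` J) t)"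
    proof (rule m_mono[OF mM])
      show "indep M {e}" by (rule nonloop_indep[OF mM e])
      show "fst ` cl ((\<lambda>x. (e, x)) ` J) t \<subseteq> {e}" unfolding cl_def by auto
    qed
    ultimately show "inj_on fst (cl ((\<lambda>x. (e, x)) ` J) t) \<and> indep M (fst ` cl ((\<lambda>x. (e, x)) ` J) t)"
      by simp
  qed
  show "good ((\<lambda>x. (e, x)) ` J)" unfolding good_def using g1 g2 g3 by simp
next
  assume g: "good ((\<lambda>x. (e, x)) ` J)"
  have nl: "\<And>y. y \<in> J \<Longrightarrow> \<not> loop N y"
  proof -
    fix y assume "y \<in> J"
    then have "(e, y) \<in> (\<lambda>x. (e, x)) ` J" by simp
    then show "\<not> loop N y" using g unfolding good_def by auto
  qed
  have gr: "\<And>y. y \<in> J \<Longrightarrow> y \<in> ground N" using J by blast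
  have c: "\<And>y. y \<in> J \<Longrightarrow> cls y \<in> T \<and> parallel N y (cls y)"
  proof -
    fix y assume "y \<in> J"
    show "cls y \<in> T \<and> parallel N y (cls y)" by (rule cls[OF gr nl]) fact+
  qed
  show "indep N J"
  proof (rule m_unsubst[OF mN])
    have "cls ` J \<subseteq> T" using c by auto
    then show "indep N (cls ` J)" by (rule Tind)
    show "inj_on cls J"
    proof (rule inj_onI)
      fix y y' assume y: "y \<in> J" and y': "y' \<in> J" and eq: "cls y = cls y'"
      let ?t = "cls y"
      have t: "?t \<in> T" using c y by blast
      have i: "inj_on fst (cl ((\<lambda>x. (e, x)) ` J) ?t)" using g t unfolding good_def by blast
      have a1: "(e, y) \<in> cl ((\<lambda>x. (e, x)) ` J) ?t" unfolding cl_def using y c by simp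
      have a2: "(e, y') \<in> cl ((\<lambda>x. (e, x)) ` J) ?t" unfolding cl_def using y' c eq by simp
      have "(e, y) = (e, y')" using inj_onD[OF i _ a1 a2] by simp
      then show "y = y'" by simp
    qed
    show "\<forall>y\<in>J. cls y = y \<or> (y \<notin> cls ` J \<and> indep N {y} \<and> \<not> indep N {cls y, y})"
    proof
      fix y assume y: "y \<in> J"
      show "cls y = y \<or> (y \<notin> cls ` J \<and> indep N {y} \<and> \<not> indep N {cls y, y})"
      proof (cases "cls y = y")
        case False
        have a: "y \<notin> cls ` J"
        proof
          assume "y \<in> cls ` J"
          then have "y \<in> T" using c by auto
          then show False using T_self False by simp
        qed
        have b: "indep N {y}" by (rule nonloop_indep[OF mN gr[OF y] nl[OF y]])
        have "\<not> indep N {y, cls y}" using c[OF y] False by (intro par_neq) auto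
        then have "\<not> indep N {cls y, y}" by (simp add: insert_commute)
        then show ?thesis using a b by simp
      qed simp
    qed
  qed
qed

lemma cl_col: "f \<in> ground N \<Longrightarrow> \<not> loop N f \<Longrightarrow>
  cl ((\<lambda>x. (x, f)) ` J) t = (if parallel N f t then (\<lambda>x. (x, f)) ` J else {})"
  unfolding cl_def by auto

lemma col0:
  assumes f: "f \<in> ground N" "\<not> loop N f" and J: "J \<subseteq> ground M"
  shows "indep M J \<longleftrightarrow> good ((\<lambda>x. (x, f)) ` J)"
proof
  assume iJ: "indep M J"
  have g1: "(\<lambda>x. (x, f)) ` J \<subseteq> ground M \<times> ground N" using f J by auto
  have g2: "\<forall>q\<in>(\<lambda>x. (x, f)) ` J. \<not> loop M (fst q) \<and> \<not> loop N (snd q)"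
  proof
    fix q assume "q \<in> (\<lambda>x. (x, f)) ` J"
    then obtain y where y: "y \<in> J" "q = (y, f)" by blast
    have "\<not> loop M y" by (rule indep_nonloop[OF mM iJ y(1)])
    then show "\<not> loop M (fst q) \<and> \<not> loop N (snd q)" using y f by simp
  qed
  have g3: "\<forall>t\<in>T. inj_on fst (cl ((\<lambda>x. (x, f)) ` J) t) \<and> indep M (fst ` cl ((\<lambda>x. (x, f)) ` J) t)"
  proof
    fix t assume t: "t \<in> T"
    have "inj_on fst ((\<lambda>x. (x, f)) ` J)" by (auto simp: inj_on_def)
    moreover have "fst ` (\<lambda>x. (x, f)) ` J = J" by force
    ultimately show "inj_on fst (cl ((\<lambda>x. (x, f)) ` J) t) \<and> indep M (fst ` cl ((\<lambda>x. (x, f)) ` J) t)"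
      using cl_col[OF f] iJ m_empty[OF mM] by simp
  qed
  show "good ((\<lambda>x. (x, f)) ` J)" unfolding good_def using g1 g2 g3 by simp
next
  assume g: "good ((\<lambda>x. (x, f)) ` J)"
  have c: "cls f \<in> T" "parallel N f (cls f)" using cls[OF f] by auto
  then have "indep M (fst ` cl ((\<lambda>x. (x, f)) ` J) (cls f))" using g unfolding good_def by blast
  moreover have "fst ` (\<lambda>x. (x, f)) ` J = J" by force
  ultimately show "indep M J" using cl_col[OF f] c by simp
qed

lemma P0_row: "e \<in> ground M \<Longrightarrow> \<not> loop M e \<Longrightarrow>
   matroid_iso (\<lambda>x. (e, x)) N (restrict P0 ({e} \<times> ground N))"
  unfolding matroid_iso_def restrict_ground restrict_indep P0_indep
proof (intro conjI allI impI)
  show "bij_betw (\<lambda>x. (e, x)) (ground N) ({e} \<times> ground N)"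
    by (auto simp: bij_betw_def inj_on_def)
next
  fix I assume "e \<in> ground M" "\<not> loop M e" "I \<subseteq> ground N"
  then show "indep N I = (good ((\<lambda>x. (e, x)) ` I) \<and> (\<lambda>x. (e, x)) ` I \<subseteq> {e} \<times> ground N)"
    using row0 by auto
qed

lemma P0_col: "f \<in> ground N \<Longrightarrow> \<not> loop N f \<Longrightarrow>
   matroid_iso (\<lambda>x. (x, f)) M (restrict P0 (ground M \<times> {f}))"
  unfolding matroid_iso_def restrict_ground restrict_indep P0_indep
proof (intro conjI allI impI)
  show "bij_betw (\<lambda>x. (x, f)) (ground M) (ground M \<times> {f})"
    by (auto simp: bij_betw_def inj_on_def)
next
  fix I assume "f \<in> ground N" "\<not> loop N f" "I \<subseteq> ground M"
  then show "indep M I = (good ((\<lambda>x. (x, f)) ` I) \<and> (\<lambda>x. (x, f)) ` I \<subseteq> ground M \<times> {f})"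
    using col0 by auto
qed

lemma P0_looprow: "e \<in> ground M \<Longrightarrow> loop M e \<Longrightarrow> rank P0 ({e} \<times> ground N) = 0"
proof (rule rank_zero[OF P0_matroid])
  assume "e \<in> ground M" "loop M e"
  then show "{e} \<times> ground N \<subseteq> ground P0" unfolding P0_ground by auto
  fix I assume "indep P0 I" "I \<subseteq> {e} \<times> ground N"
  then show "I = {}"
  proof -
    assume a: "indep P0 I" "I \<subseteq> {e} \<times> ground N"
    show "I = {}"
    proof (rule ccontr)
      assume "I \<noteq> {}"
      then obtain p where p: "p \<in> I" by blast
      then have "fst p = e" using a(2) by auto
      moreover have "\<not> loop M (fst p)" using a(1) p unfolding P0_indep good_def by auto
      ultimately show False using \<open>loop M e\<close> by simp
    qed
  qed
qed

lemma P0_loopcol: "f \<in> ground N \<Longrightarrow> loop N f \<Longrightarrow> rank P0 (ground M \<times> {f}) = 0"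
proof (rule rank_zero[OF P0_matroid])
  assume "f \<in> ground N" "loop N f"
  then show "ground M \<times> {f} \<subseteq> ground P0" unfolding P0_ground by auto
  fix I assume "indep P0 I" "I \<subseteq> ground M \<times> {f}"
  then show "I = {}"
  proof -
    assume a: "indep P0 I" "I \<subseteq> ground M \<times> {f}"
    show "I = {}"
    proof (rule ccontr)
      assume "I \<noteq> {}"
      then obtain p where p: "p \<in> I" by blast
      then have "snd p = f" using a(2) by auto
      moreover have "\<not> loop N (snd p)" using a(1) p unfolding P0_indep good_def by auto
      ultimately show False using \<open>loop N f\<close> by simp
    qed
  qed
qed

lemma basis_ex: "\<exists>B. indep M B \<and> B \<subseteq> ground M \<and> card B = rk M"
  unfolding rk_def using rank_ex[OF mM order_refl] .

lemma P0_rk: "rk P0 = rk M * card T"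
proof -
  obtain B where B: "indep M B" "B \<subseteq> ground M" "card B = rk M" using basis_ex by blast
  have gB: "good (B \<times> T)"
  proof -
    have g1: "B \<times> T \<subseteq> ground M \<times> ground N" using B TN by auto
    have g2: "\<forall>q\<in>B \<times> T. \<not> loop M (fst q) \<and> \<not> loop N (snd q)"
      using indep_nonloop[OF mM B(1)] Tnl by auto
    have g3: "\<forall>t\<in>T. inj_on fst (cl (B \<times> T) t) \<and> indep M (fst ` cl (B \<times> T) t)"
    proof
      fix t assume t: "t \<in> T"
      have e: "cl (B \<times> T) t = B \<times> {t}"
      proof
        show "cl (B \<times> T) t \<subseteq> B \<times> {t}"
        proof
          fix q assume "q \<in> cl (B \<times> T) t"
          then have q: "fst q \<in> B" "snd q \<in> T" "parallel N (snd q) t" "q = (fst q, snd q)" unfolding cl_def by auto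
          have "snd q = t" by (rule T_par[OF t q(2) q(3)])
          then show "q \<in> B \<times> {t}" using q by (metis SigmaI singletonI)
        qed
        have "t \<in> ground N" using t TN by (rule subsetD[rotated])
        then have "parallel N t t" by (rule par_refl[OF _ Tnl[OF t]])
        then show "B \<times> {t} \<subseteq> cl (B \<times> T) t" unfolding cl_def using t by auto
      qed
      have "inj_on fst (B \<times> {t})" by (auto simp: inj_on_def)
      moreover have "fst ` (B \<times> {t}) = B" by force
      ultimately show "inj_on fst (cl (B \<times> T) t) \<and> indep M (fst ` cl (B \<times> T) t)" using e B by simp
    qed
    show ?thesis unfolding good_def using g1 g2 g3 by simp
  qed
  show ?thesis unfolding rk_def[of P0]
  proof (rule rank_eqI[OF P0_matroid])
    show "ground P0 \<subseteq> ground P0" by simp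
    show "indep P0 (B \<times> T)" using gB P0_indep by simp
    show "B \<times> T \<subseteq> ground P0" using gB unfolding P0_ground good_def by simp
    show "card (B \<times> T) = rk M * card T" using B by (simp add: card_cartesian_product)
    fix J assume "indep P0 J" "J \<subseteq> ground P0"
    then have "good J" using P0_indep by simp
    then have "card J \<le> card T * rk M" by (rule good_card)
    then show "card J \<le> rk M * card T" by (simp add: mult.commute)
  qed
qed

lemma P0_tensor: "tensor_product M N P0"
  unfolding tensor_product_def quasi_product_def
  using P0_matroid P0_ground P0_row P0_col P0_looprow P0_loopcol P0_rk rkN by simp

end



context tsetup
begin

context
  fixes P :: "('a \<times> 'b) matroid"
  assumes qp: "quasi_product M N P" and rP: "rk P = rk M * card T"
begin

lemma mP: "matroid P" using qp unfolding quasi_product_def by simp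

lemma gP: "ground P = ground M \<times> ground N" using qp unfolding quasi_product_def by simp

lemma rowP:
  assumes e: "e \<in> ground M" "\<not> loop M e" and J: "J \<subseteq> ground N"
  shows "indep N J \<longleftrightarrow> indep P ((\<lambda>x. (e, x)) ` J)"
proof -
  have "matroid_iso (\<lambda>x. (e, x)) N (restrict P ({e} \<times> ground N))"
    using qp e unfolding quasi_product_def by blast
  then have "indep N J \<longleftrightarrow> indep (restrict P ({e} \<times> ground N)) ((\<lambda>x. (e, x)) ` J)"
    using J unfolding matroid_iso_def by blast
  also have "\<dots> \<longleftrightarrow> indep P ((\<lambda>x. (e, x)) ` J)" using J unfolding restrict_indep by auto
  finally show ?thesis .
qed

lemma colP:
  assumes f: "f \<in> ground N" "\<not> loop N f" and J: "J \<subseteq> ground M"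
  shows "indep M J \<longleftrightarrow> indep P ((\<lambda>x. (x, f)) ` J)"
proof -
  have "matroid_iso (\<lambda>x. (x, f)) M (restrict P (ground M \<times> {f}))"
    using qp f unfolding quasi_product_def by blast
  then have "indep M J \<longleftrightarrow> indep (restrict P (ground M \<times> {f})) ((\<lambda>x. (x, f)) ` J)"
    using J unfolding matroid_iso_def by blast
  also have "\<dots> \<longleftrightarrow> indep P ((\<lambda>x. (x, f)) ` J)" using J unfolding restrict_indep by auto
  finally show ?thesis .
qed

lemma nlP:
  assumes I: "indep P I" and p: "p \<in> I"
  shows "\<not> loop M (fst p) \<and> \<not> loop N (snd p) \<and> fst p \<in> ground M \<and> snd p \<in> ground N"
proof -
  have pg: "p \<in> ground M \<times> ground N" using m_sub[OF mP I] p gP by auto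
  have ip: "indep P {p}" by (rule m_mono[OF mP I]) (use p in simp)
  have a: "\<not> loop M (fst p)"
  proof
    assume l: "loop M (fst p)"
    have lr: "\<forall>e\<in>ground M. loop M e \<longrightarrow> rank P ({e} \<times> ground N) = 0"
      using qp unfolding quasi_product_def by (elim conjE)
    have "fst p \<in> ground M" using pg by auto
    then have "loop M (fst p) \<longrightarrow> rank P ({fst p} \<times> ground N) = 0" by (rule bspec[OF lr])
    then have "rank P ({fst p} \<times> ground N) = 0" using l by (rule mp)
    moreover have "card {p} \<le> rank P ({fst p} \<times> ground N)"
    proof (rule rank_ge[OF mP _ ip])
      show "{fst p} \<times> ground N \<subseteq> ground P" unfolding gP using \<open>fst p \<in> ground M\<close> by blast
      show "{p} \<subseteq> {fst p} \<times> ground N" using pg by (cases p) auto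
    qed
    ultimately show False by simp
  qed
  have b: "\<not> loop N (snd p)"
  proof
    assume l: "loop N (snd p)"
    have lr: "\<forall>f\<in>ground N. loop N f \<longrightarrow> rank P (ground M \<times> {f}) = 0"
      using qp unfolding quasi_product_def by (elim conjE)
    have "snd p \<in> ground N" using pg by auto
    then have "loop N (snd p) \<longrightarrow> rank P (ground M \<times> {snd p}) = 0" by (rule bspec[OF lr])
    then have "rank P (ground M \<times> {snd p}) = 0" using l by (rule mp)
    moreover have "card {p} \<le> rank P (ground M \<times> {snd p})"
    proof (rule rank_ge[OF mP _ ip])
      show "ground M \<times> {snd p} \<subseteq> ground P" unfolding gP using \<open>snd p \<in> ground N\<close> by blast
      show "{p} \<subseteq> ground M \<times> {snd p}" using pg by (cases p) auto
    qed
    ultimately show False by simp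
  qed
  show ?thesis using a b pg by auto
qed

lemma parP:
  assumes x: "x \<in> ground M" "\<not> loop M x" and p: "parallel N y t"
  shows "indep P {(x, t)}" "indep P {(x, y)}" "y \<noteq> t \<Longrightarrow> \<not> indep P {(x, y), (x, t)}"
proof -
  have g: "y \<in> ground N" "\<not> loop N y" "t \<in> ground N" "\<not> loop N t" using par_gr[OF p] by auto
  have "indep N {t}" by (rule nonloop_indep[OF mN g(3) g(4)])
  then show "indep P {(x, t)}" using rowP[OF x, of "{t}"] g by simp
  have "indep N {y}" by (rule nonloop_indep[OF mN g(1) g(2)])
  then show "indep P {(x, y)}" using rowP[OF x, of "{y}"] g by simp
  assume ne: "y \<noteq> t"
  have "\<not> indep N {y, t}" by (rule par_neq[OF p ne])
  then show "\<not> indep P {(x, y), (x, t)}" using rowP[OF x, of "{y, t}"] g by simp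
qed

lemma P_good: "indep P I \<Longrightarrow> good I"
proof -
  assume I: "indep P I"
  have g1: "I \<subseteq> ground M \<times> ground N" using m_sub[OF mP I] gP by simp
  have g2: "\<forall>p\<in>I. \<not> loop M (fst p) \<and> \<not> loop N (snd p)" using nlP[OF I] by blast
  have g3: "\<forall>t\<in>T. inj_on fst (cl I t) \<and> indep M (fst ` cl I t)"
  proof
    fix t assume t: "t \<in> T"
    have tg: "t \<in> ground N" using t TN by (rule subsetD[rotated])
    let ?A = "cl I t"
    have AI: "?A \<subseteq> I" unfolding cl_def by auto
    have iA: "indep P ?A" by (rule m_mono[OF mP I AI])
    have inj: "inj_on fst ?A"
    proof (rule inj_onI)
      fix p q assume p: "p \<in> ?A" and q: "q \<in> ?A" and f: "fst p = fst q"
      show "p = q"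
      proof (rule ccontr)
        assume ne: "p \<noteq> q"
        have pp: "parallel N (snd p) t" "p \<in> I" using p unfolding cl_def by auto
        have qq: "parallel N (snd q) t" "q \<in> I" using q unfolding cl_def by auto
        have ne2: "snd p \<noteq> snd q" using ne f by (metis prod.expand)
        have x: "fst p \<in> ground M" "\<not> loop M (fst p)" using nlP[OF I pp(2)] by auto
        have sub: "{snd p, snd q} \<subseteq> ground N" using nlP[OF I pp(2)] nlP[OF I qq(2)] by auto
        have e1: "(fst p, snd p) = p" by simp
        have e2: "(fst p, snd q) = q" using f by simp
        have "(\<lambda>z. (fst p, z)) ` {snd p, snd q} = {p, q}" using e1 e2 by simp
        moreover have "indep P {p, q}" by (rule m_mono[OF mP I]) (use pp qq in simp)
        ultimately have "indep N {snd p, snd q}" using rowP[OF x sub] by simp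
        moreover have "\<not> indep N {snd p, snd q}" by (rule par_pair[OF mN pp(1) qq(1) ne2])
        ultimately show False by simp
      qed
    qed
    let ?h = "\<lambda>p. (fst p, t)"
    have "indep P (?h ` ?A)"
    proof (rule m_subst[OF mP iA])
      show "inj_on ?h ?A" using inj by (auto simp: inj_on_def)
      show "\<forall>p\<in>?A. ?h p = p \<or> (?h p \<notin> ?A \<and> indep P {?h p} \<and> \<not> indep P {p, ?h p})"
      proof
        fix p assume p: "p \<in> ?A"
        have pp: "parallel N (snd p) t" "p \<in> I" using p unfolding cl_def by auto
        have x: "fst p \<in> ground M" "\<not> loop M (fst p)" using nlP[OF I pp(2)] by auto
        show "?h p = p \<or> (?h p \<notin> ?A \<and> indep P {?h p} \<and> \<not> indep P {p, ?h p})"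
        proof (cases "snd p = t")
          case True then show ?thesis by (simp add: prod_eq_iff)
        next
          case False
          have a: "?h p \<notin> ?A"
          proof
            assume "?h p \<in> ?A"
            then have "?h p = p" using inj_onD[OF inj _ _ p] by simp
            then show False using False by (metis snd_conv)
          qed
          have b: "indep P {?h p}" using parP(1)[OF x pp(1)] by simp
          have "\<not> indep P {(fst p, snd p), (fst p, t)}" by (rule parP(3)[OF x pp(1) False])
          then have c: "\<not> indep P {p, ?h p}" by simp
          show ?thesis using a b c by simp
        qed
      qed
    qed
    moreover have "?h ` ?A = (\<lambda>x. (x, t)) ` (fst ` ?A)" by (simp add: image_image)
    moreover have "fst ` ?A \<subseteq> ground M" using g1 AI by auto
    ultimately have "indep M (fst ` ?A)" using colP[OF tg Tnl[OF t]] by simp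
    then show "inj_on fst ?A \<and> indep M (fst ` ?A)" using inj by simp
  qed
  show "good I" unfolding good_def using g1 g2 g3 by simp
qed

lemma basis_union:
  assumes D: "\<And>t. t \<in> T \<Longrightarrow> indep M (D t) \<and> card (D t) = rk M"
  shows "indep P (\<Union>t\<in>T. D t \<times> {t})"
proof -
  let ?B = "\<Union>t\<in>T. D t \<times> {t}"
  have Dg: "\<And>t. t \<in> T \<Longrightarrow> D t \<subseteq> ground M" using D m_sub[OF mM] by blast
  have Bg: "?B \<subseteq> ground P" unfolding gP using Dg TN by blast
  obtain B' where B': "indep P B'" "B' \<subseteq> ?B" "card B' = rank P ?B"
    using rank_ex[OF mP Bg] by blast
  have finB: "finite ?B" using Bg m_fin[OF mP] by (rule finite_subset)
  have maxB: "\<forall>b\<in>?B. spans P B' b"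
  proof
    fix b assume b: "b \<in> ?B"
    have "\<not> indep P (insert b B')" if nb: "b \<notin> B'"
    proof
      assume ib: "indep P (insert b B')"
      have "insert b B' \<subseteq> ?B" using b B'(2) by blast
      then have "card (insert b B') \<le> rank P ?B" by (rule rank_ge[OF mP Bg ib])
      moreover have "card (insert b B') = Suc (card B')"
        using nb finite_subset[OF B'(2) finB] by simp
      ultimately have "Suc (card B') \<le> card B'" using B'(3) by simp
      then show False by simp
    qed
    then show "spans P B' b" unfolding spans_def[OF mP] by blast
  qed
  obtain Q where Q: "indep P Q" "Q \<subseteq> ground P" "card Q = rank P (ground P)"
    using rank_ex[OF mP order_refl] by blast
  have cQ: "card Q = rk M * card T" using Q(3) rP unfolding rk_def by simp
  have spQ: "\<forall>q\<in>Q. q \<in> B' \<or> \<not> indep P (insert q B')"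
  proof
    fix q assume q: "q \<in> Q"
    have nl: "\<not> loop M (fst q) \<and> \<not> loop N (snd q) \<and> fst q \<in> ground M \<and> snd q \<in> ground N"
      by (rule nlP[OF Q(1) q])
    define x where "x = fst q"
    define t where "t = cls (snd q)"
    have x: "x \<in> ground M" "\<not> loop M x" using nl x_def by auto
    have ct: "t \<in> T \<and> parallel N (snd q) t" unfolding t_def by (rule cls) (use nl in auto)
    have t: "t \<in> T" "parallel N (snd q) t" using ct by auto
    have tg: "t \<in> ground N" using t(1) TN by (rule subsetD[rotated])
    have Dt: "indep M (D t)" "card (D t) = rk M" using D[OF t(1)] by auto
    let ?S = "(\<lambda>z. (z, t)) ` D t"
    have iS: "indep P ?S" using colP[OF tg Tnl[OF t(1)] Dg[OF t(1)]] Dt by simp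
    have SB: "\<forall>s\<in>?S. spans P B' s"
    proof
      fix s assume "s \<in> ?S"
      then have "s \<in> ?B" using t(1) by blast
      then show "spans P B' s" using maxB by blast
    qed
    have c1: "spans P B' (x, t)"
    proof (rule m_span_trans[OF mP B'(1) iS SB])
      show "spans P ?S (x, t)" unfolding spans_def[OF mP]
      proof (cases "x \<in> D t")
        case True then show "(x, t) \<in> ?S \<or> \<not> indep P (insert (x, t) ?S)" by blast
      next
        case False
        have "\<not> indep P (insert (x, t) ?S)"
        proof
          assume a: "indep P (insert (x, t) ?S)"
          have "insert (x, t) ?S = (\<lambda>z. (z, t)) ` insert x (D t)" by simp
          moreover have "insert x (D t) \<subseteq> ground M" using x Dg[OF t(1)] by blast
          ultimately have "indep M (insert x (D t))" using a colP[OF tg Tnl[OF t(1)]] by simp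
          then have "card (insert x (D t)) \<le> rk M" by (rule indep_le_rk[OF mM])
          moreover have "card (insert x (D t)) = Suc (card (D t))"
            using False m_finI[OF mM Dt(1)] by simp
          ultimately show False using Dt(2) by simp
        qed
        then show "(x, t) \<in> ?S \<or> \<not> indep P (insert (x, t) ?S)" by blast
      qed
    qed
    have qe: "q = (x, snd q)" unfolding x_def by simp
    have "spans P B' q"
    proof (cases "snd q = t")
      case True
      then show ?thesis using c1 qe by simp
    next
      case False
      show ?thesis
      proof (rule m_span_trans[OF mP B'(1) parP(1)[OF x t(2)]])
        show "\<forall>s\<in>{(x, t)}. spans P B' s" using c1 by simp
        have "\<not> indep P {(x, snd q), (x, t)}" by (rule parP(3)[OF x t(2) False])
        then show "spans P {(x, t)} q" unfolding spans_def[OF mP] using qe by (metis insert_is_Un)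
      qed
    qed
    then show "q \<in> B' \<or> \<not> indep P (insert q B')" unfolding spans_def[OF mP] .
  qed
  have "card Q \<le> card B'" by (rule m_span_card[OF mP B'(1) Q(1) spQ])
  moreover have "card ?B = (\<Sum>t\<in>T. card (D t \<times> {t}))"
  proof (rule card_UN_disjoint[OF finT])
    show "\<forall>i\<in>T. finite (D i \<times> {i})" using Dg m_fin[OF mM] finite_subset by blast
    show "\<forall>i\<in>T. \<forall>j\<in>T. i \<noteq> j \<longrightarrow> D i \<times> {i} \<inter> D j \<times> {j} = {}" by blast
  qed
  moreover have "(\<Sum>t\<in>T. card (D t \<times> {t})) = (\<Sum>t\<in>T. rk M)"
    using D by (intro sum.cong) (auto simp: card_cartesian_product)
  ultimately have "card ?B \<le> card B'" using cQ by (simp add: mult.commute)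
  then have "B' = ?B" using card_seteq[OF finB B'(2)] by simp
  then show ?thesis using B'(1) by simp
qed

lemma good_P: "good I \<Longrightarrow> indep P I"
proof -
  assume g: "good I"
  obtain Bm where Bm: "indep M Bm" "Bm \<subseteq> ground M" "card Bm = rk M" using basis_ex by blast
  have exD: "\<And>t. t \<in> T \<Longrightarrow> \<exists>D. fst ` cl I t \<subseteq> D \<and> indep M D \<and> card D = rk M"
  proof -
    fix t assume t: "t \<in> T"
    have i: "indep M (fst ` cl I t)" using g t unfolding good_def by auto
    have "card (fst ` cl I t) \<le> card Bm" using indep_le_rk[OF mM i] Bm(3) by simp
    then obtain D where "fst ` cl I t \<subseteq> D" "D \<subseteq> fst ` cl I t \<union> Bm" "indep M D" "card D = card Bm"
      using m_extend[OF mM i Bm(1)] by blast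
    then show "\<exists>D. fst ` cl I t \<subseteq> D \<and> indep M D \<and> card D = rk M" using Bm(3) by auto
  qed
  define D where "D t = (SOME D. fst ` cl I t \<subseteq> D \<and> indep M D \<and> card D = rk M)" for t
  have Dp: "\<And>t. t \<in> T \<Longrightarrow> fst ` cl I t \<subseteq> D t \<and> indep M (D t) \<and> card (D t) = rk M"
    unfolding D_def using exD by (rule someI_ex)
  have iB: "indep P (\<Union>t\<in>T. D t \<times> {t})" by (rule basis_union) (use Dp in blast)
  let ?h = "\<lambda>p. (fst p, cls (snd p))"
  have nlI: "\<And>p. p \<in> I \<Longrightarrow> \<not> loop M (fst p) \<and> \<not> loop N (snd p) \<and> fst p \<in> ground M \<and> snd p \<in> ground N"
    using g unfolding good_def by auto
  have cI: "\<And>p. p \<in> I \<Longrightarrow> cls (snd p) \<in> T \<and> parallel N (snd p) (cls (snd p))"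
  proof -
    fix p assume "p \<in> I"
    then show "cls (snd p) \<in> T \<and> parallel N (snd p) (cls (snd p))" using nlI by (intro cls) auto
  qed
  have hsub: "?h ` I \<subseteq> (\<Union>t\<in>T. D t \<times> {t})"
  proof
    fix z assume "z \<in> ?h ` I"
    then obtain p where p: "p \<in> I" "z = ?h p" by blast
    have "p \<in> cl I (cls (snd p))" unfolding cl_def using p cI by simp
    then have "fst p \<in> D (cls (snd p))" using Dp cI[OF p(1)] by blast
    then show "z \<in> (\<Union>t\<in>T. D t \<times> {t})" using p cI[OF p(1)] by blast
  qed
  show "indep P I"
  proof (rule m_unsubst[OF mP])
    show "indep P (?h ` I)" by (rule m_mono[OF mP iB hsub])
    show "inj_on ?h I"
    proof (rule inj_onI)
      fix p q assume p: "p \<in> I" and q: "q \<in> I" and e: "?h p = ?h q"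
      let ?t = "cls (snd p)"
      have t: "?t \<in> T" using cI[OF p] by simp
      have i: "inj_on fst (cl I ?t)" using g t unfolding good_def by blast
      have a1: "p \<in> cl I ?t" unfolding cl_def using p cI by simp
      have a2: "q \<in> cl I ?t" unfolding cl_def using q cI[OF q] e by simp
      show "p = q" using inj_onD[OF i _ a1 a2] e by simp
    qed
    show "\<forall>p\<in>I. ?h p = p \<or> (p \<notin> ?h ` I \<and> indep P {p} \<and> \<not> indep P {?h p, p})"
    proof
      fix p assume p: "p \<in> I"
      have x: "fst p \<in> ground M" "\<not> loop M (fst p)" using nlI[OF p] by auto
      have pt: "parallel N (snd p) (cls (snd p))" using cI[OF p] by simp
      show "?h p = p \<or> (p \<notin> ?h ` I \<and> indep P {p} \<and> \<not> indep P {?h p, p})"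
      proof (cases "snd p = cls (snd p)")
        case True then show ?thesis by (simp add: prod_eq_iff)
      next
        case False
        have a: "p \<notin> ?h ` I"
        proof
          assume "p \<in> ?h ` I"
          then obtain q where q: "q \<in> I" "p = ?h q" by blast
          then have "snd p \<in> T" using cI by simp
          then show False using T_self False by simp
        qed
        have b: "indep P {p}" using parP(2)[OF x pt] by simp
        have "\<not> indep P {(fst p, snd p), (fst p, cls (snd p))}" by (rule parP(3)[OF x pt False])
        then have c: "\<not> indep P {?h p, p}" by (simp add: insert_commute)
        show ?thesis using a b c by simp
      qed
    qed
  qed
qed

lemma P_eq: "P = P0"
proof (rule prod_eqI)
  show "fst P = fst P0" using gP P0_ground unfolding ground_def by simp
  have "\<And>I. I \<in> snd P \<longleftrightarrow> I \<in> snd P0"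
    using P_good good_P P0_indep unfolding indep_def by blast
  then show "snd P = snd P0" by blast
qed

end

end



theorem corollary2p5:
  fixes M :: "'a matroid" and N :: "'b matroid" and n :: nat
  assumes "matroid M" and "matroid N"
    and "simplification_is_free N n"
  shows "\<exists>!P. tensor_product M N P"
proof -
  obtain S f where S: "is_simplification N S" and f: "matroid_iso f S (free_matroid n)"
    using assms(3) unfolding simplification_is_free_def by blast
  obtain T where T: "T \<subseteq> ground N" "\<forall>t\<in>T. \<not> loop N t"
      "\<forall>e\<in>ground N. \<not> loop N e \<longrightarrow> (\<exists>!t. t \<in> T \<and> parallel N e t)" "S = restrict N T"
    using S unfolding is_simplification_def by blast
  have gS: "ground S = T" using T(4) restrict_ground by simp
  have bij: "bij_betw f T {0..<n}" using f gS unfolding matroid_iso_def free_matroid_def ground_def by simp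
  have Tind: "\<And>I. I \<subseteq> T \<Longrightarrow> indep N I"
  proof -
    fix I assume I: "I \<subseteq> T"
    have "f ` I \<subseteq> {0..<n}" using bij I unfolding bij_betw_def by blast
    then have "indep (free_matroid n) (f ` I)" unfolding free_matroid_def indep_def by simp
    then have "indep S I" using f I gS unfolding matroid_iso_def by blast
    then show "indep N I" using T(4) by (simp add: restrict_indep)
  qed
  interpret tsetup M N T
  proof
    show "matroid M" "matroid N" "T \<subseteq> ground N" by (fact assms(1), fact assms(2), fact T(1))
    show "\<And>t. t \<in> T \<Longrightarrow> \<not> loop N t" using T(2) by blast
    show "\<And>e. e \<in> ground N \<Longrightarrow> \<not> loop N e \<Longrightarrow> \<exists>!t. t \<in> T \<and> parallel N e t" using T(3) by blast
    show "\<And>I. I \<subseteq> T \<Longrightarrow> indep N I" by (rule Tind)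
  qed
  show ?thesis
  proof (rule ex1I[of _ P0])
    show "tensor_product M N P0" by (rule P0_tensor)
    fix P assume tp: "tensor_product M N P"
    then have qp: "quasi_product M N P" and r: "rk P = rk M * card T"
      unfolding tensor_product_def using rkN by auto
    show "P = P0" by (rule P_eq[OF qp r])
  qed
qed


end
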